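(* Let $\varrho\in C^2(\mathbb{C};\mathbb{C})$ be neither holomorphic, nor antiholomorphic, nor $\mathbb{R}$-affine. Let $K\subseteq\mathbb{C}$ be compact and $\varepsilon>0$. Then there are $\mathbb{C}$-affine maps $\phi:\mathbb{C}\to\mathbb{C}^2$ and $\psi:\mathbb{C}^2\to\mathbb{C}^2$ such that $\sup_{z\in K}\|(\psi\circ\varrho^{\times2}\circ\phi)(z)-(z,\overline{z})\|_{\mathbb{C}^2}<\varepsilon$.
   Context: $\varrho$ is antiholomorphic if $\overline{\varrho}$ is holomorphic; $\varrho$ is $\mathbb{R}$-affine if it is affine as a map $\mathbb{R}^2\to\mathbb{R}^2$ under $\mathbb{C}\cong\mathbb{R}^2$. A map $\mathbb{C}^a\to\mathbb{C}^b$ is $\mathbb{C}$-affine if it has the form $z\mapsto Az+b$ with complex $A,b$. $\varrho^{\times2}(z_1,z_2)=(\varrho(z_1),\varrho(z_2))$. *)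

theory Defs
  imports "HOL-Analysis.Analysis"
begin

definition C2_real :: "(complex \<Rightarrow> complex) \<Rightarrow> bool" where
  "C2_real f \<longleftrightarrow> (\<exists>D :: complex \<Rightarrow> (complex \<Rightarrow>\<^sub>L complex).
      \<exists>D2 :: complex \<Rightarrow> (complex \<Rightarrow>\<^sub>L (complex \<Rightarrow>\<^sub>L complex)).
        (\<forall>x. (f has_derivative blinfun_apply (D x)) (at x)) \<and>
        (\<forall>x. (D has_derivative blinfun_apply (D2 x)) (at x)) \<and>
        continuous_on UNIV D2)"

definition antiholomorphic_on :: "(complex \<Rightarrow> complex) \<Rightarrow> complex set \<Rightarrow> bool" where
  "antiholomorphic_on f S \<longleftrightarrow> (\<lambda>z. cnj (f z)) holomorphic_on S"

definition real_affine_map :: "(complex \<Rightarrow> complex) \<Rightarrow> bool" where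
  "real_affine_map f \<longleftrightarrow> (\<exists>L b. linear L \<and> (\<forall>z. f z = L z + b))"

definition C_affine_1_2 :: "(complex \<Rightarrow> complex \<times> complex) \<Rightarrow> bool" where
  "C_affine_1_2 \<phi> \<longleftrightarrow> (\<exists>a1 a2 b1 b2. \<forall>z. \<phi> z = (a1 * z + b1, a2 * z + b2))"

definition C_affine_2_2 :: "(complex \<times> complex \<Rightarrow> complex \<times> complex) \<Rightarrow> bool" where
  "C_affine_2_2 \<psi> \<longleftrightarrow> (\<exists>a11 a12 a21 a22 b1 b2. \<forall>z w.
      \<psi> (z, w) = (a11 * z + a12 * w + b1, a21 * z + a22 * w + b2))"

definition pair_map :: "(complex \<Rightarrow> complex) \<Rightarrow> complex \<times> complex \<Rightarrow> complex \<times> complex" where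
  "pair_map f = (\<lambda>(z1, z2). (f z1, f z2))"

end

theory Submission imports Defs begin

definition cA :: "(complex \<Rightarrow> complex) \<Rightarrow> complex" where
  "cA L = (L 1 - \<i> * L \<i>) / 2"
definition cB :: "(complex \<Rightarrow> complex) \<Rightarrow> complex" where
  "cB L = (L 1 + \<i> * L \<i>) / 2"

lemma decomp:
  assumes "linear L"
  shows "L w = cA L * w + cB L * cnj w"
proof -
  have w: "w = Re w *\<^sub>R 1 + Im w *\<^sub>R \<i>"
    by (simp add: complex_eq_iff)
  have "L w = Re w *\<^sub>R L 1 + Im w *\<^sub>R L \<i>"
    by (subst w) (simp add: linear_add[OF assms] linear_scale[OF assms])
  also have "\<dots> = cA L * w + cB L * cnj w"
    unfolding cA_def cB_def
    by (subst (3 4) w) (simp add: scaleR_conv_of_real field_simps)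
  finally show ?thesis .
qed

lemma key:
  fixes \<rho> L1 L2 :: "complex \<Rightarrow> complex"
  assumes d1: "(\<rho> has_derivative L1) (at b1)" and d2: "(\<rho> has_derivative L2) (at b2)"
    and n1: "norm e1 = 1" and n2: "norm e2 = 1"
    and h1: "\<And>z. L1 (e1 * z) = p * z + q * cnj z"
    and h2: "\<And>z. L2 (e2 * z) = r * z + s * cnj z"
    and det: "p * s - q * r \<noteq> 0"
    and K: "bounded K" and ep: "\<epsilon> > 0"
  shows "\<exists>\<phi> \<psi>. C_affine_1_2 \<phi> \<and> C_affine_2_2 \<psi> \<and>
           (\<exists>\<delta> < \<epsilon>. \<forall>z\<in>K. norm ((\<psi> \<circ> pair_map \<rho> \<circ> \<phi>) z - (z, cnj z)) \<le> \<delta>)"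
proof -
  obtain M where M: "M > 0" "\<And>z. z \<in> K \<Longrightarrow> norm z \<le> M"
    using K bounded_pos by blast
  define d where "d = p * s - q * r"
  have d0: "d \<noteq> 0" using det d_def by simp
  define S where "S = norm p + norm q + norm r + norm s"
  have S0: "S \<ge> 0" unfolding S_def by simp
  define \<eta> where "\<eta> = \<epsilon> * norm d / (2 * (S + 1))"
  have eta0: "\<eta> > 0" unfolding \<eta>_def using ep d0 S0 by simp
  have l1: "linear L1" using d1 has_derivative_linear by blast
  have l2: "linear L2" using d2 has_derivative_linear by blast
  have "\<eta> / M > 0" using eta0 M by simp
  then obtain \<delta>1 where D1: "\<delta>1 > 0" "\<And>y. norm (y - b1) < \<delta>1 \<Longrightarrow>
      norm (\<rho> y - \<rho> b1 - L1 (y - b1)) \<le> \<eta> / M * norm (y - b1)"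
    using d1 unfolding has_derivative_at_alt by blast
  obtain \<delta>2 where D2: "\<delta>2 > 0" "\<And>y. norm (y - b2) < \<delta>2 \<Longrightarrow>
      norm (\<rho> y - \<rho> b2 - L2 (y - b2)) \<le> \<eta> / M * norm (y - b2)"
    using d2 \<open>\<eta> / M > 0\<close> unfolding has_derivative_at_alt by blast
  define t where "t = min \<delta>1 \<delta>2 / (2 * M)"
  have t0: "t > 0" unfolding t_def using D1 D2 M by simp
  have tM1: "t * M < \<delta>1" and tM2: "t * M < \<delta>2"
    unfolding t_def using D1 D2 M by (auto simp: field_simps min_def)
  define T where "T = complex_of_real t"
  have T0: "T \<noteq> 0" using t0 T_def by simp
  define \<phi> where "\<phi> = (\<lambda>z. (b1 + (T * e1) * z, b2 + (T * e2) * z))"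
  define \<psi> where "\<psi> = (\<lambda>(w1, w2). ((s * ((w1 - \<rho> b1) / T) - q * ((w2 - \<rho> b2) / T)) / d,
                                    (p * ((w2 - \<rho> b2) / T) - r * ((w1 - \<rho> b1) / T)) / d))"
  have C1: "C_affine_1_2 \<phi>" unfolding C_affine_1_2_def \<phi>_def
    by (rule exI[of _ "T * e1"], rule exI[of _ "T * e2"], rule exI[of _ b1], rule exI[of _ b2])
       (simp add: algebra_simps)
  have C2: "C_affine_2_2 \<psi>" unfolding C_affine_2_2_def \<psi>_def
    apply (rule exI[of _ "s / (T * d)"], rule exI[of _ "- q / (T * d)"])
    apply (rule exI[of _ "- r / (T * d)"], rule exI[of _ "p / (T * d)"])
    apply (rule exI[of _ "(q * \<rho> b2 - s * \<rho> b1) / (T * d)"])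
    apply (rule exI[of _ "(r * \<rho> b1 - p * \<rho> b2) / (T * d)"])
    using T0 d0 by (simp add: field_simps)
  have approx1: "norm ((\<rho> (b1 + T * e1 * z) - \<rho> b1) / T - (p * z + q * cnj z)) \<le> \<eta>"
    if z: "z \<in> K" for z
  proof -
    have nz: "norm (T * e1 * z) \<le> t * M"
      using M(2)[OF z] t0 n1 by (simp add: T_def norm_mult mult_left_mono)
    have "norm (\<rho> (b1 + T * e1 * z) - \<rho> b1 - L1 (T * e1 * z)) \<le> \<eta> / M * norm (T * e1 * z)"
      using D1(2)[of "b1 + T * e1 * z"] nz tM1 by simp
    also have "\<dots> \<le> \<eta> / M * (t * M)"
      using nz eta0 M by (intro mult_left_mono) auto
    also have "\<dots> = \<eta> * t" using M by simp
    finally have A: "norm (\<rho> (b1 + T * e1 * z) - \<rho> b1 - L1 (T * e1 * z)) \<le> \<eta> * t" .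
    have "L1 (T * e1 * z) = T * L1 (e1 * z)"
      using linear_scale[OF l1, of t "e1 * z"] by (simp add: T_def scaleR_conv_of_real mult.assoc)
    hence "\<rho> (b1 + T * e1 * z) - \<rho> b1 - L1 (T * e1 * z)
        = T * ((\<rho> (b1 + T * e1 * z) - \<rho> b1) / T - (p * z + q * cnj z))"
      using T0 h1 by (simp add: field_simps)
    with A have "t * norm ((\<rho> (b1 + T * e1 * z) - \<rho> b1) / T - (p * z + q * cnj z)) \<le> \<eta> * t"
      using t0 by (simp add: T_def norm_mult)
    thus ?thesis using t0 by (simp add: mult.commute)
  qed
  have approx2: "norm ((\<rho> (b2 + T * e2 * z) - \<rho> b2) / T - (r * z + s * cnj z)) \<le> \<eta>"
    if z: "z \<in> K" for z
  proof -
    have nz: "norm (T * e2 * z) \<le> t * M"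
      using M(2)[OF z] t0 n2 by (simp add: T_def norm_mult mult_left_mono)
    have "norm (\<rho> (b2 + T * e2 * z) - \<rho> b2 - L2 (T * e2 * z)) \<le> \<eta> / M * norm (T * e2 * z)"
      using D2(2)[of "b2 + T * e2 * z"] nz tM2 by simp
    also have "\<dots> \<le> \<eta> / M * (t * M)"
      using nz eta0 M by (intro mult_left_mono) auto
    also have "\<dots> = \<eta> * t" using M by simp
    finally have A: "norm (\<rho> (b2 + T * e2 * z) - \<rho> b2 - L2 (T * e2 * z)) \<le> \<eta> * t" .
    have "L2 (T * e2 * z) = T * L2 (e2 * z)"
      using linear_scale[OF l2, of t "e2 * z"] by (simp add: T_def scaleR_conv_of_real mult.assoc)
    hence "\<rho> (b2 + T * e2 * z) - \<rho> b2 - L2 (T * e2 * z)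
        = T * ((\<rho> (b2 + T * e2 * z) - \<rho> b2) / T - (r * z + s * cnj z))"
      using T0 h2 by (simp add: field_simps)
    with A have "t * norm ((\<rho> (b2 + T * e2 * z) - \<rho> b2) / T - (r * z + s * cnj z)) \<le> \<eta> * t"
      using t0 by (simp add: T_def norm_mult)
    thus ?thesis using t0 by (simp add: mult.commute)
  qed
  define \<delta> where "\<delta> = S * \<eta> / norm d"
  have "\<delta> = S * \<epsilon> / (2 * (S + 1))"
    proof -
    have "norm d > 0" "S + 1 > 0" using d0 S0 by auto
    hence "\<eta> / norm d = \<epsilon> / (2 * (S + 1))" unfolding \<eta>_def by simp
    thus ?thesis unfolding \<delta>_def by (metis times_divide_eq_right)
  qed
  also have "\<dots> < \<epsilon>" using S0 ep by (simp add: field_simps add_nonneg_pos)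
  finally have dlt: "\<delta> < \<epsilon>" .
  have bound: "norm ((\<psi> \<circ> pair_map \<rho> \<circ> \<phi>) z - (z, cnj z)) \<le> \<delta>" if z: "z \<in> K" for z
  proof -
    define X1 where "X1 = (\<rho> (b1 + T * e1 * z) - \<rho> b1) / T"
    define X2 where "X2 = (\<rho> (b2 + T * e2 * z) - \<rho> b2) / T"
    define E1 where "E1 = X1 - (p * z + q * cnj z)"
    define E2 where "E2 = X2 - (r * z + s * cnj z)"
    have e1: "norm E1 \<le> \<eta>" using approx1[OF z] unfolding E1_def X1_def .
    have e2: "norm E2 \<le> \<eta>" using approx2[OF z] unfolding E2_def X2_def .
    have eq: "(\<psi> \<circ> pair_map \<rho> \<circ> \<phi>) z - (z, cnj z)
        = ((s * E1 - q * E2) / d, (p * E2 - r * E1) / d)"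
    proof -
      have a: "(\<psi> \<circ> pair_map \<rho> \<circ> \<phi>) z = ((s * X1 - q * X2) / d, (p * X2 - r * X1) / d)"
        unfolding \<psi>_def \<phi>_def pair_map_def comp_def X1_def X2_def by simp
      have x1: "X1 = E1 + (p * z + q * cnj z)" and x2: "X2 = E2 + (r * z + s * cnj z)"
        unfolding E1_def E2_def by simp_all
      show ?thesis unfolding a x1 x2 using d0 by (simp add: d_def field_simps)
    qed
    have "norm ((s * E1 - q * E2) / d) \<le> (norm s * \<eta> + norm q * \<eta>) / norm d"
    proof -
      have "norm (s * E1 - q * E2) \<le> norm s * norm E1 + norm q * norm E2"
        by (metis norm_mult norm_triangle_ineq4)
      also have "\<dots> \<le> norm s * \<eta> + norm q * \<eta>"
        using e1 e2 by (intro add_mono mult_left_mono) auto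
      finally show ?thesis by (simp add: norm_divide divide_right_mono)
    qed
    moreover have "norm ((p * E2 - r * E1) / d) \<le> (norm p * \<eta> + norm r * \<eta>) / norm d"
    proof -
      have "norm (p * E2 - r * E1) \<le> norm p * norm E2 + norm r * norm E1"
        by (metis norm_mult norm_triangle_ineq4)
      also have "\<dots> \<le> norm p * \<eta> + norm r * \<eta>"
        using e1 e2 by (intro add_mono mult_left_mono) auto
      finally show ?thesis by (simp add: norm_divide divide_right_mono)
    qed
    moreover have "\<delta> = (norm s * \<eta> + norm q * \<eta>) / norm d + (norm p * \<eta> + norm r * \<eta>) / norm d"
      unfolding \<delta>_def S_def by (simp add: add_divide_distrib[symmetric] algebra_simps)
    ultimately have "norm ((s * E1 - q * E2) / d, (p * E2 - r * E1) / d) \<le> \<delta>"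
      using norm_Pair_le[of "(s * E1 - q * E2) / d" "(p * E2 - r * E1) / d"] by linarith
    thus ?thesis using eq by simp
  qed
  show ?thesis using C1 C2 dlt bound by blast
qed

theorem proposition5p2:
  fixes \<rho> :: "complex \<Rightarrow> complex" and K :: "complex set" and \<epsilon> :: real
  assumes "C2_real \<rho>"
    and "\<not> \<rho> holomorphic_on UNIV"
    and "\<not> antiholomorphic_on \<rho> UNIV"
    and "\<not> real_affine_map \<rho>"
    and "compact K"
    and "\<epsilon> > 0"
  shows "\<exists>\<phi> \<psi>. C_affine_1_2 \<phi> \<and> C_affine_2_2 \<psi> \<and>
           (\<exists>\<delta> < \<epsilon>. \<forall>z\<in>K. norm ((\<psi> \<circ> pair_map \<rho> \<circ> \<phi>) z - (z, cnj z)) \<le> \<delta>)"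
proof -
  obtain D :: "complex \<Rightarrow> (complex \<Rightarrow>\<^sub>L complex)" where
    Dd: "\<And>x. (\<rho> has_derivative blinfun_apply (D x)) (at x)"
    using assms(1) unfolding C2_real_def by blast
  define L where "L x = blinfun_apply (D x)" for x
  have dL: "(\<rho> has_derivative L x) (at x)" for x using Dd L_def by simp
  have lin: "linear (L x)" for x using dL has_derivative_linear by blast
  have Bex: "\<exists>b. cB (L b) \<noteq> 0"
  proof (rule ccontr)
    assume "\<not> ?thesis"
    hence B0: "\<And>b. cB (L b) = 0" by blast
    have "\<rho> holomorphic_on UNIV"
      unfolding holomorphic_on_def field_differentiable_def has_field_derivative_def
    proof
      fix x :: complex
      have "L x = (*) (cA (L x))"
        using decomp[OF lin, of x] B0 by (auto simp: fun_eq_iff mult.commute)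
      thus "\<exists>f'. (\<rho> has_derivative (*) f') (at x within UNIV)" using dL[of x] by metis
    qed
    thus False using assms(2) by blast
  qed
  have Aex: "\<exists>b. cA (L b) \<noteq> 0"
  proof (rule ccontr)
    assume "\<not> ?thesis"
    hence A0: "\<And>b. cA (L b) = 0" by blast
    have "(\<lambda>z. cnj (\<rho> z)) holomorphic_on UNIV"
      unfolding holomorphic_on_def field_differentiable_def has_field_derivative_def
    proof
      fix x :: complex
      have "(\<lambda>w. cnj (L x w)) = (*) (cnj (cB (L x)))"
        using decomp[OF lin, of x] A0 by (auto simp: fun_eq_iff)
      thus "\<exists>f'. ((\<lambda>z. cnj (\<rho> z)) has_derivative (*) f') (at x within UNIV)"
        using has_derivative_cnj[OF dL[of x]] by metis
    qed
    thus False using assms(3) unfolding antiholomorphic_on_def by blast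
  qed
  have bK: "bounded K" using assms(5) compact_imp_bounded by blast
  show ?thesis
  proof (cases "\<exists>b1 b2. cA (L b1) * cB (L b2) - cB (L b1) * cA (L b2) \<noteq> 0")
    case True
    then obtain b1 b2 where det: "cA (L b1) * cB (L b2) - cB (L b1) * cA (L b2) \<noteq> 0" by blast
    show ?thesis
      by (rule key[OF dL[of b1] dL[of b2], of 1 1 "cA (L b1)" "cB (L b1)" "cA (L b2)" "cB (L b2)"])
         (use det bK assms(6) decomp[OF lin] in auto)
  next
    case False
    obtain b where b: "cB (L b) \<noteq> 0" using Bex by blast
    obtain b' where b': "cA (L b') \<noteq> 0" using Aex by blast
    have "cA (L b') * cB (L b) - cB (L b') * cA (L b) = 0" using False by blast
    hence a: "cA (L b) \<noteq> 0" using b b' by auto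
    have h2: "L b (\<i> * z) = (\<i> * cA (L b)) * z + (- \<i> * cB (L b)) * cnj z" for z
      using decomp[OF lin, of b "\<i> * z"] by simp
    have det: "cA (L b) * (- \<i> * cB (L b)) - cB (L b) * (\<i> * cA (L b)) \<noteq> 0"
      using a b by (simp add: algebra_simps)
    show ?thesis
      by (rule key[OF dL[of b] dL[of b], of 1 "\<i>" "cA (L b)" "cB (L b)" "\<i> * cA (L b)" "- \<i> * cB (L b)"])
         (use det bK assms(6) decomp[OF lin] h2 in auto)
  qed
qed

end
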